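(* There is no morphism $\pi:\mathbb{P}^1_{\mathbb{C}}\to\mathbb{P}^1_{\mathbb{C}}$ of degree $6$ for which there exist three distinct points $p,q,r\in\mathbb{P}^1$ such that $\pi$ has ramification index $(3,3)$ at $p$, ramification index $(2,2,2)$ at $q$, and ramification index $(3,2,1)$ at $r$.
   Context: A morphism $\pi:\mathbb{P}^1\to\mathbb{P}^1$ is said to have ramification index $(n_1,\dots,n_k)$ at a point $x_0$ if $\pi^{-1}(x_0)$ consists of exactly $k$ points at which $\pi$ has local multiplicities $n_1,\dots,n_k$ (so $n_1+\dots+n_k=\deg\pi$). *)

theory Defs
  imports "HOL-Computational_Algebra.Polynomial" "HOL-Library.Multiset" Complex_Main
begin

text \<open>The projective line P^1(C) is modelled as complex option: Some z is the affine
point z, None is the point at infinity.  A morphism P^1 -> P^1 is given (as always)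
in homogeneous coordinates by a pair of coprime polynomials (f, g), namely
[X:Y] |-> [Y^d f(X/Y) : Y^d g(X/Y)] with d = max (deg f) (deg g) its degree;
in the affine chart it is z |-> f(z)/g(z).\<close>

type_synonym P1 = "complex option"

definition mdeg :: "complex poly \<Rightarrow> complex poly \<Rightarrow> nat" where
  "mdeg f g = max (degree f) (degree g)"

definition is_morphism :: "complex poly \<Rightarrow> complex poly \<Rightarrow> bool" where
  "is_morphism f g \<longleftrightarrow> coprime f g \<and> (f \<noteq> 0 \<or> g \<noteq> 0)"

text \<open>The fibre over y = [a:b] is the zero locus of the degree-d binary form
b F - a G.  Dehomogenized: over Some a it is f - a g, over None it is g.\<close>

fun fibre_poly :: "complex poly \<Rightarrow> complex poly \<Rightarrow> P1 \<Rightarrow> complex poly" where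
  "fibre_poly f g (Some a) = f - smult a g"
| "fibre_poly f g None = g"

text \<open>Local multiplicity of the morphism (f,g) at x in the fibre over y: the
multiplicity of x as a root of the binary form b F - a G (at infinity this is
d minus the degree of the dehomogenized polynomial).\<close>

fun local_mult :: "complex poly \<Rightarrow> complex poly \<Rightarrow> P1 \<Rightarrow> P1 \<Rightarrow> nat" where
  "local_mult f g y (Some z) = order z (fibre_poly f g y)"
| "local_mult f g y None = mdeg f g - degree (fibre_poly f g y)"

text \<open>The ramification profile over y: the multiset of local multiplicities at the
points of the preimage of y.  "pi has ramification index (n1,...,nk) at y" means
ram_profile f g y = {#n1,...,nk#}.\<close>

definition ram_profile :: "complex poly \<Rightarrow> complex poly \<Rightarrow> P1 \<Rightarrow> nat multiset" where
  "ram_profile f g y =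
     image_mset (local_mult f g y) (mset_set {x. local_mult f g y x > 0})"

end

theory Submission
  imports Defs "HOL-Computational_Algebra.Polynomial_Factorial" "HOL-Computational_Algebra.Fundamental_Theorem_Algebra" "HOL-Computational_Algebra.Field_as_Ring"
begin


lemma smult_conv: "smult c p = [:c:] * p" by simp

lemma pderiv_constp[simp]: "pderiv [:c:] = 0" by (simp add: pderiv_pCons)

lemma core0:
  fixes a0 a1 a2 e u v w :: complex and B :: "complex poly"
  assumes a0: "a0 \<noteq> 0" and a2: "a2 \<noteq> 0" and e: "e \<noteq> 0" and u: "u \<noteq> 0" and v: "v \<noteq> 0" and w: "w \<noteq> 0"
  and eq: "smult u ([:a0,a1,a2:]^3) + smult v (B^2) + smult w ([:0,0,0,-e,1:]) = 0"
  shows False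
proof -
  define A where "A = [:a0,a1,a2:]"
  define H where "H = smult (-w) [:0,0,0,-e,1:]"
  have eq': "smult u (A*A*A) + smult v (B*B) + smult w [:0,0,0,-e,1:] = 0"
    using eq unfolding A_def by (simp add: power2_eq_square power3_eq_cube)
  have P: "smult v (B*B) = H - smult u (A*A*A)"
    unfolding H_def using eq' by (simp add: algebra_simps eq_neg_iff_add_eq_0 add_eq_0_iff2)
  have dP: "pderiv (smult v (B*B)) = pderiv H - pderiv (smult u (A*A*A))"
    using P by (simp add: pderiv_diff)
  have A0: "A \<noteq> 0" using a2 unfolding A_def by auto
  have degA: "degree A = 2" using a2 unfolding A_def by simp
  have degH: "degree H = 4" using w unfolding H_def by simp
  have degA3: "degree (smult u (A*A*A)) = 6" using A0 u degA by (simp add: degree_mult_eq)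
  have "degree (smult v (B*B)) = 6"
    unfolding P diff_conv_add_uminus using degA3 degH by (subst degree_add_eq_right) simp_all
  hence "degree (B*B) = 6" using v by simp
  hence B0: "B \<noteq> 0" by auto
  hence degB: "degree B = 3" using \<open>degree (B*B) = 6\<close> by (simp add: degree_mult_eq)
  have pB0: "poly B 0 \<noteq> 0"
  proof
    assume "poly B 0 = 0"
    have "poly (smult v (B*B)) 0 = poly (H - smult u (A*A*A)) 0" using P by simp
    hence "u * (a0*a0*a0) = 0" using \<open>poly B 0 = 0\<close> unfolding A_def H_def by simp
    thus False using u a0 by simp
  qed
  define dA where "dA = pderiv A"
  define dB where "dB = pderiv B"
  have dBB: "pderiv (smult v (B*B)) = smult v (smult 2 (B*dB))"
    unfolding dB_def pderiv_smult pderiv_mult smult_conv pderiv_constp numeral_poly[symmetric] by algebra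
  have key0: "A*A*smult v (B*(smult 3 (dA*B) - smult 2 (A*dB))) = smult 3 (A*A*dA*smult v (B*B)) - A*A*A * pderiv (smult v (B*B))"
    unfolding dBB unfolding smult_conv numeral_poly[symmetric] by algebra
  have dAAA: "pderiv (smult u (A*A*A)) = smult u (smult 3 (A*A*dA))"
    unfolding dA_def pderiv_smult pderiv_mult smult_conv pderiv_constp numeral_poly[symmetric] by algebra
  have key1: "A*A*smult v (B*(smult 3 (dA*B) - smult 2 (A*dB))) = A*A*(smult 3 (dA*H) - A*pderiv H)"
    unfolding key0 dP dAAA using P unfolding smult_conv numeral_poly[symmetric] by algebra
  define L where "L = [:3*e*a0, -4*a0, -(a1+3*e*a2), 2*a2:]"
  define X2 where "X2 = [:0,0,1::complex:]"
  have HL: "smult 3 (dA*H) - A*pderiv H = smult (-w) (L * X2)"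
    unfolding dA_def A_def H_def L_def X2_def by (simp add: pderiv_pCons pderiv_smult algebra_simps)
  define Q where "Q = smult 3 (dA*B) - smult 2 (A*dB)"
  have "A*A*(B * smult v Q) = A*A*(smult (-w) (L*X2))"
    using key1 unfolding HL Q_def by (simp only: mult_smult_right)
  moreover have "A*A \<noteq> 0" using A0 by simp
  ultimately have key2: "B * smult v Q = smult (-w) (L * X2)"
    using mult_left_cancel by blast
  have X2sq: "X2 = [:0,1:]^2" unfolding X2_def by (simp add: power2_eq_square)
  have "\<not> [:0,1:] dvd B" using pB0 by (simp add: dvd_iff_poly_eq_0)
  moreover have "prime_elem [:0,1::complex:]" by (rule prime_elem_linear_field_poly) simp
  ultimately have "coprime [:0,1::complex:] B"
    using prime_elem_imp_coprime by blast
  hence cop: "coprime B X2" unfolding X2sq by (simp add: coprime_commute)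
  have "B dvd smult (-w) (L * X2)" unfolding key2[symmetric] by (rule dvd_triv_left)
  hence "B dvd L * X2" using w by (simp add: dvd_smult_iff)
  hence "B dvd L" using cop by (simp add: coprime_dvd_mult_left_iff)
  then obtain k where Lk: "L = B * k" by (elim dvdE)
  have L0: "L \<noteq> 0" and degL: "degree L = 3" using a2 unfolding L_def by auto
  have "k \<noteq> 0" using L0 Lk by auto
  hence "degree k = 0" using degL degB B0 Lk by (simp add: degree_mult_eq)
  then obtain mu where kmu: "k = [:mu:]" by (elim degree_eq_zeroE)
  have mu: "mu \<noteq> 0" using \<open>k \<noteq> 0\<close> kmu by auto
  have LB: "L = smult mu B" using Lk kmu by simp
  have "B * smult v Q = B * smult (-w*mu) X2"
    using key2 unfolding LB by (simp add: algebra_simps)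
  hence vQ: "smult v Q = smult (-w*mu) X2" using B0 mult_left_cancel by blast
  define R where "R = smult 3 (dA*L) - smult 2 (A*pderiv L)"
  have "R = smult mu Q" unfolding R_def Q_def LB dB_def pderiv_smult unfolding smult_conv numeral_poly[symmetric] by algebra
  hence "smult v R = smult mu (smult v Q)" by (simp add: mult.commute)
  hence "smult v R = smult (-w*mu*mu) X2" unfolding vQ by (simp add: algebra_simps)
  hence "coeff (smult v R) 1 = 0" unfolding X2_def by simp
  moreover have "coeff R 1 = 30 * e * a0 * a2"
    unfolding R_def dA_def A_def L_def by (simp add: pderiv_pCons algebra_simps)
  ultimately show False using v e a0 a2 by simp
qed



fun lin :: "P1 \<Rightarrow> complex poly" where
  "lin (Some z) = [:-z, 1:]"
| "lin None = 1"

lemma degree_lin: "degree (lin x) \<le> 1"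
  by (cases x) auto

lemma degree_lin'[simp]: "degree (lin x) \<le> Suc 0"
  by (cases x) auto

lemma lin_nz[simp]: "lin x \<noteq> 0"
  by (cases x) auto

definition J :: "nat \<Rightarrow> complex poly \<Rightarrow> complex poly" where
  "J n h = monom 1 (n - degree h) * reflect_poly h"

lemma J_0[simp]: "J n 0 = 0" by (simp add: J_def)

lemma coeff_J: "degree h \<le> n \<Longrightarrow> coeff (J n h) i = (if i \<le> n then coeff h (n - i) else 0)"
  unfolding J_def coeff_monom_mult coeff_reflect_poly
  by (auto simp: coeff_eq_0)

lemma J_add: "degree h \<le> n \<Longrightarrow> degree k \<le> n \<Longrightarrow> J n (h + k) = J n h + J n k"
  by (rule poly_eqI) (simp add: coeff_J degree_add_le)

lemma J_smult: "J n (smult a h) = smult a (J n h)"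
  by (cases "a = 0") (simp_all add: J_def reflect_poly_smult)

lemma J_mult: "degree h \<le> m \<Longrightarrow> degree k \<le> n \<Longrightarrow> J (m + n) (h * k) = J m h * J n k"
proof (cases "h = 0 \<or> k = 0")
  case True then show ?thesis by auto
next
  case False
  assume a: "degree h \<le> m" "degree k \<le> n"
  have "degree (h*k) = degree h + degree k" using False by (simp add: degree_mult_eq)
  hence "m + n - degree (h*k) = (m - degree h) + (n - degree k)" using a by simp
  thus ?thesis unfolding J_def reflect_poly_mult by (simp add: mult_monom algebra_simps)
qed

lemma J_pow: "degree h \<le> n \<Longrightarrow> J (k * n) (h ^ k) = (J n h) ^ k"
proof (induction k)
  case 0 then show ?case by (simp add: J_def)
next
  case (Suc k)
  have "J (Suc k * n) (h ^ Suc k) = J (n + k * n) (h * h ^ k)" by (simp add: add.commute)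
  also have "\<dots> = J n h * J (k*n) (h^k)"
    using Suc.prems by (intro J_mult) (auto intro: order.trans[OF degree_power_le])
  finally show ?case using Suc by simp
qed

lemma J_mult': "degree h \<le> m \<Longrightarrow> degree k \<le> n \<Longrightarrow> N = m + n \<Longrightarrow> J N (h * k) = J m h * J n k"
  using J_mult by blast

lemma J_pow': "degree h \<le> n \<Longrightarrow> N = k * n \<Longrightarrow> J N (h ^ k) = (J n h) ^ k"
  using J_pow by blast

fun inv1 :: "P1 \<Rightarrow> P1" where
  "inv1 (Some z) = (if z = 0 then None else Some (1/z))"
| "inv1 None = Some 0"

fun kap :: "P1 \<Rightarrow> complex" where
  "kap (Some z) = (if z = 0 then 1 else -z)"
| "kap None = 1"

lemma kap_nz: "kap x \<noteq> 0" by (cases x) auto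

lemma inv1_inj: "inv1 x = inv1 y \<Longrightarrow> x = y"
  by (cases x; cases y) (auto split: if_splits)

lemma J_lin: "J 1 (lin x) = smult (kap x) (lin (inv1 x))"
proof (cases x)
  case None then show ?thesis by (simp add: J_def monom_Suc)
next
  case (Some z)
  then show ?thesis
    by (cases "z = 0") (auto simp: J_def reflect_poly_def field_simps)
qed

fun sh :: "complex \<Rightarrow> P1 \<Rightarrow> P1" where
  "sh t (Some z) = Some (z - t)"
| "sh t None = None"

lemma sh_inj: "sh t x = sh t y \<Longrightarrow> x = y"
  by (cases x; cases y) auto

lemma pcompose_lin: "pcompose (lin x) [:t,1:] = lin (sh t x)"
  by (cases x) (simp_all add: pcompose_pCons pcompose_1)

lemma pcompose_pow: "pcompose (p ^ n) q = (pcompose p q) ^ n"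
  by (induction n) (simp_all add: pcompose_mult pcompose_1)

definition EQ :: "complex \<Rightarrow> complex \<Rightarrow> complex \<Rightarrow> P1 \<Rightarrow> P1 \<Rightarrow> P1 \<Rightarrow> P1 \<Rightarrow> P1 \<Rightarrow> P1 \<Rightarrow> P1 \<Rightarrow> P1 \<Rightarrow> bool" where
  "EQ u v w x1 x2 y1 y2 y3 c d e \<longleftrightarrow>
     smult u ((lin x1 * lin x2)^3) + smult v ((lin y1 * lin y2 * lin y3)^2) + smult w (lin c ^ 3 * lin d ^ 2 * lin e) = 0"

lemma EQ_shift:
  assumes "EQ u v w x1 x2 y1 y2 y3 c d e"
  shows "EQ u v w (sh t x1) (sh t x2) (sh t y1) (sh t y2) (sh t y3) (sh t c) (sh t d) (sh t e)"
proof -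
  have "pcompose (smult u ((lin x1 * lin x2)^3) + smult v ((lin y1 * lin y2 * lin y3)^2) + smult w (lin c ^ 3 * lin d ^ 2 * lin e)) [:t,1:] = 0"
    using assms unfolding EQ_def by simp
  thus ?thesis unfolding EQ_def
    by (simp add: pcompose_add pcompose_smult pcompose_mult pcompose_pow pcompose_lin)
qed

lemma EQ_inv:
  assumes "EQ u v w x1 x2 y1 y2 y3 c d e"
  shows "EQ (u * (kap x1 * kap x2)^3) (v * (kap y1 * kap y2 * kap y3)^2) (w * (kap c ^ 3 * kap d ^ 2 * kap e))
            (inv1 x1) (inv1 x2) (inv1 y1) (inv1 y2) (inv1 y3) (inv1 c) (inv1 d) (inv1 e)"
proof -
  have dl: "degree (lin x) \<le> 1" for x by (rule degree_lin)
  have d2: "degree (lin x * lin y) \<le> 2" for x y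
    using degree_mult_le[of "lin x" "lin y"] dl[of x] dl[of y] by linarith
  have d3: "degree (lin x * lin y * lin z) \<le> 3" for x y z
    using degree_mult_le[of "lin x * lin y" "lin z"] d2[of x y] dl[of z] by linarith
  have dp: "degree (p ^ k) \<le> k * n" if "degree p \<le> n" for p :: "complex poly" and k n
    using degree_power_le[of p k] that by (metis le_trans mult.commute mult_le_mono2)
  have J2: "J 2 (lin x * lin y) = J 1 (lin x) * J 1 (lin y)" for x y
    by (rule J_mult') (simp_all add: dl)
  have J3: "J 3 (lin x * lin y * lin z) = J 1 (lin x) * J 1 (lin y) * J 1 (lin z)" for x y z
    unfolding J2[symmetric] by (rule J_mult') (simp_all add: dl d2)
  have T1: "J 6 ((lin x1 * lin x2)^3) = (J 1 (lin x1) * J 1 (lin x2))^3"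
    unfolding J2[symmetric] by (rule J_pow') (simp_all add: d2)
  have T2: "J 6 ((lin y1 * lin y2 * lin y3)^2) = (J 1 (lin y1) * J 1 (lin y2) * J 1 (lin y3))^2"
    unfolding J3[symmetric] by (rule J_pow') (simp_all add: d3)
  have dc3: "degree (lin c ^ 3) \<le> 3" using dp[OF dl, of c 3] by simp
  have dd2: "degree (lin d ^ 2) \<le> 2" using dp[OF dl, of d 2] by simp
  have dcd: "degree (lin c ^ 3 * lin d ^ 2) \<le> 5"
    using degree_mult_le[of "lin c ^ 3" "lin d ^ 2"] dc3 dd2 by linarith
  have T3: "J 6 (lin c ^ 3 * lin d ^ 2 * lin e) = J 1 (lin c) ^ 3 * J 1 (lin d) ^ 2 * J 1 (lin e)"
  proof -
    have "J 6 (lin c ^ 3 * lin d ^ 2 * lin e) = J 5 (lin c ^ 3 * lin d ^ 2) * J 1 (lin e)"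
      by (rule J_mult') (simp_all add: dcd dl)
    also have "J 5 (lin c ^ 3 * lin d ^ 2) = J 3 (lin c ^ 3) * J 2 (lin d ^ 2)"
      by (rule J_mult') (simp_all add: dc3 dd2)
    also have "J 3 (lin c ^ 3) = J 1 (lin c) ^ 3" by (rule J_pow') (simp_all add: dl)
    also have "J 2 (lin d ^ 2) = J 1 (lin d) ^ 2" by (rule J_pow') (simp_all add: dl)
    finally show ?thesis .
  qed
  have D1: "degree (smult u ((lin x1 * lin x2)^3)) \<le> 6"
    using dp[OF d2, of x1 x2 3] by (simp add: order.trans[OF degree_smult_le])
  have D2: "degree (smult v ((lin y1 * lin y2 * lin y3)^2)) \<le> 6"
    using dp[OF d3, of y1 y2 y3 2] by (simp add: order.trans[OF degree_smult_le])
  have D3: "degree (smult w (lin c ^ 3 * lin d ^ 2 * lin e)) \<le> 6"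
  proof -
    have "degree (lin c ^ 3 * lin d ^ 2 * lin e) \<le> 6"
      using degree_mult_le[of "lin c ^ 3 * lin d ^ 2" "lin e"] dcd dl[of e] by linarith
    thus ?thesis by (rule order.trans[OF degree_smult_le])
  qed
  have D12: "degree (smult u ((lin x1 * lin x2)^3) + smult v ((lin y1 * lin y2 * lin y3)^2)) \<le> 6"
    using D1 D2 by (simp add: degree_add_le)
  have "J 6 (smult u ((lin x1 * lin x2)^3) + smult v ((lin y1 * lin y2 * lin y3)^2) + smult w (lin c ^ 3 * lin d ^ 2 * lin e)) = 0"
    using assms unfolding EQ_def by simp
  hence "smult u (J 6 ((lin x1 * lin x2)^3)) + smult v (J 6 ((lin y1 * lin y2 * lin y3)^2)) + smult w (J 6 (lin c ^ 3 * lin d ^ 2 * lin e)) = 0"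
    by (simp add: J_add[OF D12 D3] J_add[OF D1 D2] J_smult)
  thus ?thesis unfolding EQ_def T1 T2 T3 J_lin
    by (simp add: mult_smult_left mult_smult_right smult_power algebra_simps)
qed


lemma core_pts0:
  assumes "u \<noteq> 0" "v \<noteq> 0" "w \<noteq> 0" "a1 \<noteq> 0" "a2 \<noteq> 0" "e0 \<noteq> 0"
    and "EQ u v w (Some a1) (Some a2) y1 y2 y3 (Some 0) None (Some e0)"
  shows False
proof -
  have A: "lin (Some a1) * lin (Some a2) = [:a1*a2, -(a1+a2), 1:]" by simp
  have H: "lin (Some 0) ^ 3 * lin None ^ 2 * lin (Some e0) = [:0,0,0,-e0,1:]"
    by (simp add: eval_nat_numeral)
  show False
    using assms(7) unfolding EQ_def A H
    by (intro core0[of "a1*a2" 1 e0 u v w "-(a1+a2)" "lin y1 * lin y2 * lin y3"]) (use assms in auto)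
qed

lemma core_pts:
  assumes "u \<noteq> 0" "v \<noteq> 0" "w \<noteq> 0" "EQ u v w x1 x2 y1 y2 y3 c None e"
    and "x1 \<noteq> None" "x2 \<noteq> None" "c \<noteq> None" "e \<noteq> None" "c \<noteq> x1" "c \<noteq> x2" "c \<noteq> e"
  shows False
proof -
  obtain c0 where c0: "c = Some c0" using assms by auto
  obtain a1 where a1: "x1 = Some a1" using assms by auto
  obtain a2 where a2: "x2 = Some a2" using assms by auto
  obtain e0 where e0: "e = Some e0" using assms by auto
  have "EQ u v w (sh c0 x1) (sh c0 x2) (sh c0 y1) (sh c0 y2) (sh c0 y3) (sh c0 c) (sh c0 None) (sh c0 e)"
    by (rule EQ_shift) fact
  hence "EQ u v w (Some (a1 - c0)) (Some (a2 - c0)) (sh c0 y1) (sh c0 y2) (sh c0 y3) (Some 0) None (Some (e0 - c0))"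
    using c0 a1 a2 e0 by simp
  thus False
    by (rule core_pts0[rotated 6]) (use assms c0 a1 a2 e0 in auto)
qed

lemma core_gen:
  assumes "u \<noteq> 0" "v \<noteq> 0" "w \<noteq> 0" "EQ u v w x1 x2 y1 y2 y3 c d e"
    and "x1 \<noteq> d" "x2 \<noteq> d" "c \<noteq> d" "e \<noteq> d" "c \<noteq> x1" "c \<noteq> x2" "c \<noteq> e"
  shows False
proof (cases d)
  case None
  then show False using core_pts[of u v w x1 x2 y1 y2 y3 c e] assms by auto
next
  case (Some d0)
  let ?m = "\<lambda>x. inv1 (sh d0 x)"
  have E1: "EQ u v w (sh d0 x1) (sh d0 x2) (sh d0 y1) (sh d0 y2) (sh d0 y3) (sh d0 c) (sh d0 d) (sh d0 e)"
    by (rule EQ_shift) fact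
  have E2: "EQ (u * (kap (sh d0 x1) * kap (sh d0 x2))^3) (v * (kap (sh d0 y1) * kap (sh d0 y2) * kap (sh d0 y3))^2)
     (w * (kap (sh d0 c) ^ 3 * kap (sh d0 d) ^ 2 * kap (sh d0 e)))
     (?m x1) (?m x2) (?m y1) (?m y2) (?m y3) (?m c) (?m d) (?m e)"
    by (rule EQ_inv[OF E1])
  have md: "?m d = None" using Some by simp
  have inj: "x \<noteq> y \<Longrightarrow> ?m x \<noteq> ?m y" for x y using inv1_inj sh_inj by metis
  have nn: "x \<noteq> d \<Longrightarrow> ?m x \<noteq> None" for x using inj[of x d] md by simp
  show False
    by (rule core_pts[OF _ _ _ E2[unfolded md]]) (use assms inj nn in \<open>auto simp: kap_nz\<close>)
qed



fun sv :: "P1 \<Rightarrow> complex" where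
  "sv (Some a) = 1" | "sv None = 0"
fun tv :: "P1 \<Rightarrow> complex" where
  "tv (Some a) = -a" | "tv None = 1"

lemma fibre_lin: "fibre_poly f g y = smult (sv y) f + smult (tv y) g"
  by (cases y) simp_all

definition dt :: "P1 \<Rightarrow> P1 \<Rightarrow> complex" where
  "dt y1 y2 = sv y1 * tv y2 - tv y1 * sv y2"

lemma dt_nz: "y1 \<noteq> y2 \<Longrightarrow> dt y1 y2 \<noteq> 0"
  by (cases y1; cases y2) (auto simp: dt_def)

lemma rel: "smult (dt q r) (fibre_poly f g p) + smult (dt r p) (fibre_poly f g q) + smult (dt p q) (fibre_poly f g r) = 0"
  by (rule poly_eqI) (simp add: fibre_lin dt_def algebra_simps)

lemma span_f: "smult (dt y1 y2) f = smult (tv y2) (fibre_poly f g y1) - smult (tv y1) (fibre_poly f g y2)"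
  by (rule poly_eqI) (simp add: fibre_lin dt_def algebra_simps)

lemma span_g: "smult (dt y1 y2) g = smult (sv y1) (fibre_poly f g y2) - smult (sv y2) (fibre_poly f g y1)"
  by (rule poly_eqI) (simp add: fibre_lin dt_def algebra_simps)

lemma fib_nz:
  assumes "is_morphism f g" "mdeg f g = 6"
  shows "fibre_poly f g y \<noteq> 0"
proof (cases y)
  case None
  show ?thesis
  proof
    assume "fibre_poly f g y = 0"
    hence "g = 0" using None by simp
    hence "is_unit f" using assms(1) unfolding is_morphism_def by simp
    hence "degree f = 0" by (auto simp: is_unit_poly_iff)
    thus False using assms(2) \<open>g = 0\<close> unfolding mdeg_def by simp
  qed
next
  case (Some a)
  show ?thesis
  proof
    assume "fibre_poly f g y = 0"
    hence fg: "f = smult a g" using Some by simp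
    have "g dvd f" unfolding fg by (simp add: dvd_smult)
    moreover have "coprime f g" using assms(1) unfolding is_morphism_def by simp
    ultimately have "is_unit g" using coprime_common_divisor[of f g g] by simp
    hence "degree g = 0" by (auto simp: is_unit_poly_iff)
    moreover have "degree f \<le> degree g" unfolding fg by (rule degree_smult_le)
    ultimately show False using assms(2) unfolding mdeg_def by simp
  qed
qed

lemma fib_deg:
  assumes "mdeg f g = 6"
  shows "degree (fibre_poly f g y) \<le> 6"
proof (cases y)
  case None then show ?thesis using assms unfolding mdeg_def by simp
next
  case (Some a)
  have "degree g \<le> 6" using assms unfolding mdeg_def by simp
  hence "degree (smult a g) \<le> 6" using degree_smult_le[of a g] by linarith
  moreover have "degree f \<le> 6" using assms unfolding mdeg_def by simp
  ultimately show ?thesis using Some by (simp add: degree_diff_le)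
qed

lemma fibre_fact:
  fixes y :: P1
  assumes "is_morphism f g" "mdeg f g = 6"
  defines "F \<equiv> fibre_poly f g y"
  defines "S \<equiv> {x. local_mult f g y x > 0}"
  shows "finite S \<and> F = smult (lead_coeff F) (\<Prod>x\<in>S. lin x ^ local_mult f g y x)"
proof -
  have F0: "F \<noteq> 0" unfolding F_def by (rule fib_nz[OF assms(1,2)])
  define R where "R = {z. poly F z = 0}"
  define N where "N = (if degree F < 6 then {None} else ({} :: P1 set))"
  have finR: "finite R" unfolding R_def using F0 by (rule poly_roots_finite)
  have SR: "S = Some ` R \<union> N"
  proof (rule set_eqI)
    fix x show "x \<in> S \<longleftrightarrow> x \<in> Some ` R \<union> N"
    proof (cases x)
      case None then show ?thesis unfolding S_def N_def F_def using assms(2) by auto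
    next
      case (Some z)
      have "local_mult f g y x > 0 \<longleftrightarrow> poly F z = 0"
        using Some F0 order_root[of F z] unfolding F_def by auto
      then show ?thesis unfolding S_def R_def N_def using Some by auto
    qed
  qed
  have finN: "finite N" unfolding N_def by auto
  have disj: "Some ` R \<inter> N = {}" unfolding N_def by auto
  have PN: "(\<Prod>x\<in>N. lin x ^ local_mult f g y x) = 1" unfolding N_def by auto
  have PR: "(\<Prod>x\<in>Some ` R. lin x ^ local_mult f g y x) = (\<Prod>z\<in>R. [:-z,1:] ^ order z F)"
    by (subst prod.reindex) (auto simp: F_def)
  have "(\<Prod>x\<in>S. lin x ^ local_mult f g y x) = (\<Prod>z\<in>R. [:-z,1:] ^ order z F)"
    unfolding SR by (subst prod.union_disjoint) (use finR finN disj PN PR in auto)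
  hence "smult (lead_coeff F) (\<Prod>x\<in>S. lin x ^ local_mult f g y x) = F"
    unfolding R_def by (simp add: complex_poly_decompose)
  moreover have "finite S" unfolding SR using finR finN by auto
  ultimately show ?thesis by simp
qed

lemma prof_basic:
  assumes "finite S" "image_mset h (mset_set S) = M"
  shows "card S = size M" "h ` S = set_mset M"
  using assms by (metis size_image_mset size_mset_set, metis finite_set_mset_mset_set set_image_mset)

lemma prof33:
  fixes h :: "'a \<Rightarrow> nat"
  assumes "finite S" "image_mset h (mset_set S) = {#3,3#}"
  shows "\<exists>x1 x2. S = {x1,x2} \<and> x1 \<noteq> x2 \<and> h x1 = 3 \<and> h x2 = 3"
proof -
  have "card S = 2" "h ` S = {3}" using prof_basic[OF assms] by auto
  then obtain x y where "S = {x,y}" "x \<noteq> y" by (auto simp: card_2_iff)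
  thus ?thesis using \<open>h ` S = {3}\<close> by auto
qed

lemma prof222:
  fixes h :: "'a \<Rightarrow> nat"
  assumes "finite S" "image_mset h (mset_set S) = {#2,2,2#}"
  shows "\<exists>x1 x2 x3. S = {x1,x2,x3} \<and> h x1 = 2 \<and> h x2 = 2 \<and> h x3 = 2 \<and> x1 \<noteq> x2 \<and> x2 \<noteq> x3 \<and> x1 \<noteq> x3"
proof -
  have "card S = 3" "h ` S = {2}" using prof_basic[OF assms] by auto
  then obtain x y z where "S = {x,y,z}" "x \<noteq> y" "y \<noteq> z" "x \<noteq> z" by (auto simp: card_3_iff)
  thus ?thesis using \<open>h ` S = {2}\<close> by auto
qed

lemma prof321:
  fixes h :: "'a \<Rightarrow> nat"
  assumes "finite S" "image_mset h (mset_set S) = {#3,2,1#}"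
  shows "\<exists>c d e. S = {c,d,e} \<and> h c = 3 \<and> h d = 2 \<and> h e = 1"
proof -
  have cS: "card S = 3" and hS: "h ` S = {3,2,1}" using prof_basic[OF assms] by auto
  obtain c where c: "c \<in> S" "h c = 3" using hS by (metis imageE insertI1)
  obtain d where d: "d \<in> S" "h d = 2" using hS by (metis imageE insertI1 insertI2)
  obtain e where e: "e \<in> S" "h e = 1" using hS by (metis imageE insertI1 insertI2)
  have sub: "{c,d,e} \<subseteq> S" using c d e by auto
  have "c \<noteq> d" "d \<noteq> e" "c \<noteq> e" using c d e by auto
  hence "card {c,d,e} = 3" by simp
  hence "{c,d,e} = S" using card_subset_eq[OF assms(1) sub] cS by simp
  thus ?thesis using c d e by blast
qed

lemma disjoint_fibres:
  assumes "is_morphism f g" "mdeg f g = 6" "y1 \<noteq> y2"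
    "local_mult f g y1 x > 0" "local_mult f g y2 x > 0"
  shows False
proof (cases x)
  case None
  have "degree (fibre_poly f g y1) < 6" "degree (fibre_poly f g y2) < 6"
    using assms None by auto
  hence D1: "degree (smult a (fibre_poly f g y1)) < 6" and D2: "degree (smult a (fibre_poly f g y2)) < 6" for a
    using degree_smult_le[of a "fibre_poly f g y1"] degree_smult_le[of a "fibre_poly f g y2"] by linarith+
  have "degree (smult (dt y1 y2) f) < 6"
    unfolding span_f[where f=f and g=g] by (rule degree_diff_less) (rule D1, rule D2)
  moreover have "degree (smult (dt y1 y2) g) < 6"
    unfolding span_g[where f=f and g=g] by (rule degree_diff_less) (rule D2, rule D1)
  ultimately have "degree f < 6" "degree g < 6" using dt_nz[OF assms(3)] by auto
  thus False using assms(2) unfolding mdeg_def by simp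
next
  case (Some z)
  have "poly (fibre_poly f g y1) z = 0" "poly (fibre_poly f g y2) z = 0"
    using assms(4,5) Some order_root by auto
  hence "poly (smult (dt y1 y2) f) z = 0" "poly (smult (dt y1 y2) g) z = 0"
    unfolding span_f[where f=f and g=g] span_g[where f=f and g=g] by simp_all
  hence "poly f z = 0" "poly g z = 0" using dt_nz[OF assms(3)] by auto
  hence "[:-z,1:] dvd f" "[:-z,1:] dvd g" by (simp_all add: dvd_iff_poly_eq_0)
  moreover have "coprime f g" using assms(1) unfolding is_morphism_def by simp
  ultimately have "is_unit [:-z,1::complex:]" using coprime_common_divisor[of f g "[:-z,1:]"] by simp
  thus False by (auto simp: is_unit_poly_iff)
qed



theorem mainTheorem3:
  shows "\<not> (\<exists>(f::complex poly) (g::complex poly) (p::P1) (q::P1) (r::P1).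
            is_morphism f g \<and> mdeg f g = 6 \<and>
            p \<noteq> q \<and> q \<noteq> r \<and> p \<noteq> r \<and>
            ram_profile f g p = {#3, 3#} \<and>
            ram_profile f g q = {#2, 2, 2#} \<and>
            ram_profile f g r = {#3, 2, 1#})"
proof
  assume "\<exists>(f::complex poly) (g::complex poly) (p::P1) (q::P1) (r::P1).
            is_morphism f g \<and> mdeg f g = 6 \<and>
            p \<noteq> q \<and> q \<noteq> r \<and> p \<noteq> r \<and>
            ram_profile f g p = {#3, 3#} \<and>
            ram_profile f g q = {#2, 2, 2#} \<and>
            ram_profile f g r = {#3, 2, 1#}"
  then obtain f g p q r where mor: "is_morphism f g" and md: "mdeg f g = 6"
    and pq: "p \<noteq> q" and qr: "q \<noteq> r" and pr: "p \<noteq> r"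
    and rp: "ram_profile f g p = {#3, 3#}" and rq: "ram_profile f g q = {#2, 2, 2#}"
    and rr: "ram_profile f g r = {#3, 2, 1#}" by blast
  define Sp where "Sp = {x. local_mult f g p x > 0}"
  define Sq where "Sq = {x. local_mult f g q x > 0}"
  define Sr where "Sr = {x. local_mult f g r x > 0}"
  define Fp where "Fp = fibre_poly f g p"
  define Fq where "Fq = fibre_poly f g q"
  define Fr where "Fr = fibre_poly f g r"
  have fp: "finite Sp" and Fpe: "Fp = smult (lead_coeff Fp) (\<Prod>x\<in>Sp. lin x ^ local_mult f g p x)"
    using fibre_fact[OF mor md, of p] unfolding Sp_def Fp_def by auto
  have fq: "finite Sq" and Fqe: "Fq = smult (lead_coeff Fq) (\<Prod>x\<in>Sq. lin x ^ local_mult f g q x)"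
    using fibre_fact[OF mor md, of q] unfolding Sq_def Fq_def by auto
  have fr: "finite Sr" and Fre: "Fr = smult (lead_coeff Fr) (\<Prod>x\<in>Sr. lin x ^ local_mult f g r x)"
    using fibre_fact[OF mor md, of r] unfolding Sr_def Fr_def by auto
  have kp: "lead_coeff Fp \<noteq> 0" unfolding Fp_def using fib_nz[OF mor md] by simp
  have kq: "lead_coeff Fq \<noteq> 0" unfolding Fq_def using fib_nz[OF mor md] by simp
  have kr: "lead_coeff Fr \<noteq> 0" unfolding Fr_def using fib_nz[OF mor md] by simp
  obtain x1 x2 where Sp2: "Sp = {x1,x2}" "x1 \<noteq> x2" "local_mult f g p x1 = 3" "local_mult f g p x2 = 3"
    using prof33[OF fp, of "local_mult f g p"] rp unfolding ram_profile_def Sp_def by auto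
  obtain y1 y2 y3 where Sq3: "Sq = {y1,y2,y3}" "local_mult f g q y1 = 2" "local_mult f g q y2 = 2"
      "local_mult f g q y3 = 2" "y1 \<noteq> y2" "y2 \<noteq> y3" "y1 \<noteq> y3"
    using prof222[OF fq, of "local_mult f g q"] rq unfolding ram_profile_def Sq_def by auto
  obtain c d e where Sr3: "Sr = {c,d,e}" "local_mult f g r c = 3" "local_mult f g r d = 2" "local_mult f g r e = 1"
    using prof321[OF fr, of "local_mult f g r"] rr unfolding ram_profile_def Sr_def by auto
  have cde: "c \<noteq> d" "d \<noteq> e" "c \<noteq> e" using Sr3 by auto
  have Fp2: "Fp = smult (lead_coeff Fp) ((lin x1 * lin x2)^3)"
    using Fpe Sp2 by (simp add: power_mult_distrib)
  have Fq2: "Fq = smult (lead_coeff Fq) ((lin y1 * lin y2 * lin y3)^2)"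
    using Fqe Sq3 by (simp add: power_mult_distrib mult.assoc)
  have Fr2: "Fr = smult (lead_coeff Fr) (lin c ^ 3 * lin d ^ 2 * lin e)"
    using Fre Sr3 cde by (simp add: algebra_simps)
  have "smult (dt q r) Fp + smult (dt r p) Fq + smult (dt p q) Fr = 0"
    unfolding Fp_def Fq_def Fr_def by (rule rel)
  hence E: "EQ (dt q r * lead_coeff Fp) (dt r p * lead_coeff Fq) (dt p q * lead_coeff Fr) x1 x2 y1 y2 y3 c d e"
    unfolding EQ_def by (subst (asm) Fp2, subst (asm) Fq2, subst (asm) Fr2) simp
  have disj: "x \<in> Sp \<Longrightarrow> x \<in> Sr \<Longrightarrow> False" for x
    using disjoint_fibres[OF mor md pr] unfolding Sp_def Sr_def by auto
  have "x1 \<in> Sp" "x2 \<in> Sp" "c \<in> Sr" "d \<in> Sr" using Sp2 Sr3 by auto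
  hence "x1 \<noteq> d" "x2 \<noteq> d" "c \<noteq> x1" "c \<noteq> x2" using disj by metis+
  show False
    by (rule core_gen[OF _ _ _ E]) (use kp kq kr dt_nz pq qr pr cde \<open>x1 \<noteq> d\<close> \<open>x2 \<noteq> d\<close> \<open>c \<noteq> x1\<close> \<open>c \<noteq> x2\<close> in auto)
qed


end
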